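(* Let $\mathcal{C}$ be a finite collection of pairwise disjoint closed circular discs in $\mathbb{R}^2$, and let $T_1,\dots,T_m$ be triples of discs from $\mathcal{C}$, each with non-collinear centers, with feasible regions $F_1,\dots,F_m$. Then every point $q\in F_1\cap\cdots\cap F_m$ illuminates all objective arcs of all the triples $T_1,\dots,T_m$: for each $t$ and each point $p$ on an objective arc of a disc of $T_t$, the open segment from $q$ to $p$ does not meet the interior of any disc of $T_t$.
   Context: For two disjoint closed discs $C_a, C_b$ with centers $c_a,c_b$, let $p_a, p_b$ be the points where the segment $\overline{c_ac_b}$ meets the boundary circles of $C_a$ and $C_b$ respectively, and let $l_a, l_b$ be the lines through $p_a$, $p_b$ perpendicular to $\overline{c_ac_b}$. The slab $S_{a,b}$ is the closed region between the parallel lines $l_a$ and $l_b$. For three pairwise disjoint discs $C_i,C_j,C_k$, the feasible region is $S_{i,j}\cap S_{j,k}\cap S_{i,k}$. Objective arcs of a triple $C_i,C_j,C_k$ with non-collinear centers $c_i,c_j,c_k$: on $C_i$, the edges $\overline{c_ic_j}$ and $\overline{c_ic_k}$ meet the boundary circle of $C_i$ in two points, and the objective arc of $C_i$ is the arc between these two points of length less than half the circumference; similarly for $C_j$, $C_k$. *)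

theory Defs
  imports "HOL-Analysis.Analysis"
begin

type_synonym disc = "(real^2) \<times> real"

definition disc_set :: "disc \<Rightarrow> (real^2) set" where
  "disc_set D = cball (fst D) (snd D)"

definition disc_interior :: "disc \<Rightarrow> (real^2) set" where
  "disc_interior D = ball (fst D) (snd D)"

text \<open>Slab S_{a,b}: closed region between the lines through p_a and p_b
  perpendicular to the segment c_a c_b.\<close>
definition slab :: "disc \<Rightarrow> disc \<Rightarrow> (real^2) set" where
  "slab A B =
    (let ca = fst A; cb = fst B; u = cb - ca;
         pa = ca + (snd A / norm u) *\<^sub>R u;
         pb = cb - (snd B / norm u) *\<^sub>R u
     in {x. min (pa \<bullet> u) (pb \<bullet> u) \<le> x \<bullet> u \<and> x \<bullet> u \<le> max (pa \<bullet> u) (pb \<bullet> u)})"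

definition feasible_region :: "disc \<Rightarrow> disc \<Rightarrow> disc \<Rightarrow> (real^2) set" where
  "feasible_region A B C = slab A B \<inter> slab B C \<inter> slab A C"

text \<open>Objective arc of disc A in the triple (A,B,C): the shorter arc of the boundary
  circle of A between the points where the segments c_A c_B and c_A c_C cross it.
  For non-collinear centres this is the part of the circle inside the (convex, angle < pi)
  cone at c_A spanned by c_B - c_A and c_C - c_A.\<close>
definition objective_arc :: "disc \<Rightarrow> disc \<Rightarrow> disc \<Rightarrow> (real^2) set" where
  "objective_arc A B C =
     sphere (fst A) (snd A) \<inter>
     {fst A + a *\<^sub>R (fst B - fst A) + b *\<^sub>R (fst C - fst A) | a b. a \<ge> 0 \<and> b \<ge> 0}"

definition triple_discs :: "disc \<times> disc \<times> disc \<Rightarrow> disc set" where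
  "triple_discs T = {fst T, fst (snd T), snd (snd T)}"

definition triple_arcs :: "disc \<times> disc \<times> disc \<Rightarrow> (real^2) set" where
  "triple_arcs T = (case T of (A, B, C) \<Rightarrow>
     objective_arc A B C \<union> objective_arc B A C \<union> objective_arc C A B)"

definition triple_feasible :: "disc \<times> disc \<times> disc \<Rightarrow> (real^2) set" where
  "triple_feasible T = (case T of (A, B, C) \<Rightarrow> feasible_region A B C)"

end

theory Submission
  imports Defs
begin



lemma sep_dist:
  fixes a b :: "'a::real_normed_vector"
  assumes "cball a ra \<inter> cball b rb = {}" "ra > 0" "rb > 0"
  shows "norm (b - a) \<ge> ra + rb"
proof (rule ccontr)
  assume h: "\<not> ?thesis"
  define y where "y = a + (ra/(ra+rb)) *\<^sub>R (b - a)"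
  have "dist a y = ra/(ra+rb) * norm (b-a)" using assms by (simp add: y_def dist_norm)
  also have "\<dots> \<le> ra/(ra+rb) * (ra+rb)" using h assms by (intro mult_left_mono) auto
  also have "\<dots> = ra" using assms by simp
  finally have 1: "y \<in> cball a ra" by simp
  have k: "1 - ra/(ra+rb) = rb/(ra+rb)" using assms by (simp add: field_simps)
  have "b - y = (1 - ra/(ra+rb)) *\<^sub>R (b - a)" by (simp add: y_def scaleR_diff_left)
  hence "b - y = (rb/(ra+rb)) *\<^sub>R (b - a)" by (simp only: k)
  hence "dist b y = rb/(ra+rb) * norm (b-a)" using assms by (simp add: dist_norm)
  also have "\<dots> \<le> rb/(ra+rb) * (ra+rb)" using h assms by (intro mult_left_mono) auto
  also have "\<dots> = rb" using assms by simp
  finally have "y \<in> cball b rb" by simp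
  with 1 assms(1) show False by blast
qed

lemma slab_bounds:
  assumes "norm (b - a) \<ge> ra + rb" "ra > 0" "rb > 0" "x \<in> slab (a,ra) (b,rb)"
  shows "(x-a) \<bullet> (b-a) \<ge> ra*norm(b-a)" "(x-b) \<bullet> (a-b) \<ge> rb*norm(b-a)"
proof -
  define u where "u = b - a"
  have nu: "norm u > 0" using assms unfolding u_def by linarith
  have uu: "u \<bullet> u = norm u * norm u" by (simp add: dot_square_norm power2_eq_square)
  have pa: "(a + (ra / norm u) *\<^sub>R u) \<bullet> u = a \<bullet> u + ra * norm u"
    using nu uu by (simp add: inner_add_left)
  have pb: "(b - (rb / norm u) *\<^sub>R u) \<bullet> u = b \<bullet> u - rb * norm u"
    using nu uu by (simp add: inner_diff_left)
  have ba: "b \<bullet> u - a \<bullet> u = norm u * norm u" using uu by (simp add: u_def inner_diff_left[symmetric])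
  have "(ra + rb) * norm u \<le> norm u * norm u" using assms nu unfolding u_def
    by (simp add: mult_right_mono)
  hence le: "a \<bullet> u + ra * norm u \<le> b \<bullet> u - rb * norm u" using ba by (simp add: algebra_simps)
  have x: "a \<bullet> u + ra * norm u \<le> x \<bullet> u \<and> x \<bullet> u \<le> b \<bullet> u - rb * norm u"
    using assms(4) unfolding slab_def Let_def
    by (simp add: u_def[symmetric] pa pb min_def max_def le split: if_splits)
  show "(x-a) \<bullet> (b-a) \<ge> ra*norm(b-a)" using x by (simp add: u_def[symmetric] inner_diff_left)
  have "(x-b) \<bullet> (a-b) = - ((x-b) \<bullet> u)" by (simp add: u_def inner_diff_right)
  then show "(x-b) \<bullet> (a-b) \<ge> rb*norm(b-a)" using x by (simp add: u_def[symmetric] inner_diff_left)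
qed

lemma cball_side:
  fixes a b p :: "'a::real_inner"
  assumes "p \<in> cball a ra" "norm (b - a) \<ge> ra + rb"
  shows "(p-b) \<bullet> (a-b) \<ge> rb*norm(b-a)"
proof -
  have "(p-b) \<bullet> (a-b) = (a-b) \<bullet> (a-b) + (p-a) \<bullet> (a-b)" by (simp add: algebra_simps inner_diff_left inner_diff_right)
  moreover have "(a-b)\<bullet>(a-b) = norm (b-a) * norm (b-a)"
    by (metis dot_square_norm norm_minus_commute power2_eq_square)
  moreover have "(p-a) \<bullet> (a-b) \<ge> - (norm (p-a) * norm (b-a))"
    using Cauchy_Schwarz_ineq2[of "p-a" "a-b"] by (simp add: norm_minus_commute)
  moreover have "norm (p-a) \<le> ra" using assms(1) by (simp add: dist_norm norm_minus_commute)
  moreover have "norm (p-a) * norm (b-a) \<le> ra * norm (b-a)"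
    using \<open>norm (p-a) \<le> ra\<close> by (rule mult_right_mono) simp
  moreover have "(ra + rb) * norm (b-a) \<le> norm (b-a) * norm (b-a)"
    using assms(2) by (rule mult_right_mono) simp
  moreover have "(ra + rb) * norm (b-a) = ra * norm (b-a) + rb * norm (b-a)" by (simp add: distrib_right)
  ultimately show ?thesis by linarith
qed

lemma half:
  fixes a b x p :: "'a::real_inner"
  assumes "a \<noteq> b" "(x-b) \<bullet> (a-b) \<ge> rb*norm(b-a)" "(p-b) \<bullet> (a-b) \<ge> rb*norm(b-a)"
  shows "open_segment x p \<inter> ball b rb = {}"
proof (rule ccontr)
  assume "\<not> ?thesis"
  then obtain y where y: "y \<in> open_segment x p" "dist b y < rb" by auto
  then obtain t where t: "0 < t" "t < 1" "y = (1-t) *\<^sub>R x + t *\<^sub>R p" by (auto simp: in_segment)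
  have "y - b = (1-t) *\<^sub>R (x - b) + t *\<^sub>R (p - b)" using t by (simp add: algebra_simps)
  hence "(y-b) \<bullet> (a-b) = (1-t) * ((x-b) \<bullet> (a-b)) + t * ((p-b) \<bullet> (a-b))"
    by (simp add: inner_add_left)
  also have "\<dots> \<ge> (1-t) * (rb*norm(b-a)) + t * (rb*norm(b-a))"
    using t assms by (intro add_mono mult_left_mono) auto
  finally have 1: "(y-b) \<bullet> (a-b) \<ge> rb*norm(b-a)" by (simp add: algebra_simps)
  have "(y-b) \<bullet> (a-b) \<le> norm (y-b) * norm (a-b)" by (rule norm_cauchy_schwarz)
  also have "\<dots> < rb * norm (b-a)" using y(2) assms(1)
    by (simp add: dist_norm norm_minus_commute)
  finally show False using 1 by simp
qed

lemma sq_expand: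
  fixes w v :: "'a::real_inner"
  shows "(w + k *\<^sub>R v) \<bullet> (w + k *\<^sub>R v) = w \<bullet> w + 2 * k * (w \<bullet> v) + (k * k) * (v \<bullet> v)"
  by (simp add: inner_add_left inner_add_right inner_commute algebra_simps)

lemma arc:
  fixes a b c p q :: "'a::real_inner"
  assumes "p \<in> sphere a ra" "p = a + \<alpha> *\<^sub>R (b-a) + \<beta> *\<^sub>R (c-a)" "\<alpha> \<ge> 0" "\<beta> \<ge> 0"
    "(q-a) \<bullet> (b-a) \<ge> ra*norm(b-a)" "(q-a) \<bullet> (c-a) \<ge> ra*norm(c-a)"
  shows "open_segment q p \<inter> ball a ra = {}"
proof (rule ccontr)
  assume "\<not> ?thesis"
  then obtain y where y: "y \<in> open_segment q p" "dist a y < ra" by auto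
  then obtain t where t: "0 < t" "t < 1" "y = (1-t) *\<^sub>R q + t *\<^sub>R p" by (auto simp: in_segment)
  define w where "w = p - a"
  have nw: "norm w = ra" using assms(1) by (simp add: w_def dist_norm norm_minus_commute)
  have w: "w = \<alpha> *\<^sub>R (b-a) + \<beta> *\<^sub>R (c-a)" using assms(2) by (simp add: w_def)
  have "(q-a) \<bullet> w = \<alpha> * ((q-a) \<bullet> (b-a)) + \<beta> * ((q-a) \<bullet> (c-a))"
    by (simp add: w inner_add_right)
  also have "\<dots> \<ge> \<alpha> * (ra*norm(b-a)) + \<beta> * (ra*norm(c-a))"
    using assms by (intro add_mono mult_left_mono) auto
  also have "\<alpha> * (ra*norm(b-a)) + \<beta> * (ra*norm(c-a)) = ra * (norm (\<alpha> *\<^sub>R (b-a)) + norm (\<beta> *\<^sub>R (c-a)))"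
    by (simp only: norm_scaleR abs_of_nonneg[OF assms(3)] abs_of_nonneg[OF assms(4)]) (simp add: algebra_simps)
  also have "\<dots> \<ge> ra * norm w" using nw unfolding w
    by (intro mult_left_mono norm_triangle_ineq) auto
  finally have qw: "(q-a) \<bullet> w \<ge> ra * ra" using nw by simp
  have wq: "w \<bullet> (q - p) \<ge> 0"
  proof -
    have "w \<bullet> (q - p) = (q-a) \<bullet> w - w \<bullet> w" by (simp add: w_def algebra_simps inner_diff_left inner_diff_right inner_commute)
    also have "w \<bullet> w = ra * ra" using nw by (metis dot_square_norm power2_eq_square)
    finally show ?thesis using qw by simp
  qed
  have "y - a = w + (1-t) *\<^sub>R (q - p)" using t by (simp add: w_def algebra_simps)
  hence "(y-a) \<bullet> (y-a) = w \<bullet> w + 2*(1-t) * (w \<bullet> (q-p)) + ((1-t)*(1-t)) * ((q-p)\<bullet>(q-p))"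
    by (simp only: sq_expand)
  moreover have "w \<bullet> w = ra * ra" using nw by (metis dot_square_norm power2_eq_square)
  moreover have "(q-p)\<bullet>(q-p) \<ge> 0" by simp
  moreover have "2*(1-t) * (w \<bullet> (q-p)) \<ge> 0" using wq t by simp
  moreover have "((1-t)*(1-t)) * ((q-p)\<bullet>(q-p)) \<ge> 0" by simp
  ultimately have "(y-a) \<bullet> (y-a) \<ge> ra * ra" by linarith
  moreover have "(y-a) \<bullet> (y-a) = norm (y-a) * norm (y-a)" by (metis dot_square_norm power2_eq_square)
  moreover have "norm (y-a) < ra" "0 \<le> norm (y-a)" using y(2) by (auto simp: dist_norm norm_minus_commute)
  moreover have "norm (y-a) * norm (y-a) < ra * ra"
  proof -
    have "0 < ra" using \<open>norm (y-a) < ra\<close> \<open>0 \<le> norm (y-a)\<close> by linarith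
    then show ?thesis by (rule mult_strict_mono[OF \<open>norm (y-a) < ra\<close> \<open>norm (y-a) < ra\<close> _ \<open>0 \<le> norm (y-a)\<close>])
  qed
  ultimately show False by linarith
qed

lemma triple_ok:
  fixes a b c q p :: "real^2"
  assumes pos: "ra > 0" "rb > 0" "rc > 0"
    and dab: "norm (b-a) \<ge> ra + rb" and dbc: "norm (c-b) \<ge> rb + rc" and dac: "norm (c-a) \<ge> ra + rc"
    and ne: "a \<noteq> b" "b \<noteq> c" "a \<noteq> c"
    and q: "q \<in> slab (a,ra) (b,rb)" "q \<in> slab (b,rb) (c,rc)" "q \<in> slab (a,ra) (c,rc)"
    and p: "p \<in> objective_arc (a,ra) (b,rb) (c,rc) \<union> objective_arc (b,rb) (a,ra) (c,rc) \<union> objective_arc (c,rc) (a,ra) (b,rb)"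
  shows "open_segment q p \<inter> ball a ra = {} \<and> open_segment q p \<inter> ball b rb = {} \<and> open_segment q p \<inter> ball c rc = {}"
proof -
  note SAB = slab_bounds[OF dab pos(1,2) q(1)]
  note SBC = slab_bounds[OF dbc pos(2,3) q(2)]
  note SAC = slab_bounds[OF dac pos(1,3) q(3)]
  have dba: "norm (a-b) \<ge> rb + ra" and dcb: "norm (b-c) \<ge> rc + rb" and dca: "norm (a-c) \<ge> rc + ra"
    using dab dbc dac by (auto simp: norm_minus_commute)
  have SAB': "(q-a) \<bullet> (b-a) \<ge> ra*norm(a-b)" "(q-b) \<bullet> (a-b) \<ge> rb*norm(a-b)"
    using SAB by (auto simp: norm_minus_commute)
  have SBC': "(q-b) \<bullet> (c-b) \<ge> rb*norm(b-c)" "(q-c) \<bullet> (b-c) \<ge> rc*norm(b-c)"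
    using SBC by (auto simp: norm_minus_commute)
  have SAC': "(q-a) \<bullet> (c-a) \<ge> ra*norm(a-c)" "(q-c) \<bullet> (a-c) \<ge> rc*norm(a-c)"
    using SAC by (auto simp: norm_minus_commute)
  from p consider (A) "p \<in> objective_arc (a,ra) (b,rb) (c,rc)" | (B) "p \<in> objective_arc (b,rb) (a,ra) (c,rc)"
     | (C) "p \<in> objective_arc (c,rc) (a,ra) (b,rb)" by blast
  then show ?thesis
  proof cases
    case A
    then obtain \<alpha> \<beta> where h: "p \<in> sphere a ra" "p = a + \<alpha> *\<^sub>R (b-a) + \<beta> *\<^sub>R (c-a)" "\<alpha> \<ge> 0" "\<beta> \<ge> 0"
      unfolding objective_arc_def by auto
    have pc: "p \<in> cball a ra" using h(1) by simp
    show ?thesis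
      using arc[OF h SAB(1) SAC(1)]
        half[OF ne(1) SAB(2) cball_side[OF pc dab]]
        half[OF ne(3) SAC(2) cball_side[OF pc dac]] by blast
  next
    case B
    then obtain \<alpha> \<beta> where h: "p \<in> sphere b rb" "p = b + \<alpha> *\<^sub>R (a-b) + \<beta> *\<^sub>R (c-b)" "\<alpha> \<ge> 0" "\<beta> \<ge> 0"
      unfolding objective_arc_def by auto
    have pc: "p \<in> cball b rb" using h(1) by simp
    show ?thesis
      using arc[OF h SAB'(2) SBC(1)]
        half[OF ne(1)[symmetric] SAB'(1) cball_side[OF pc dba]]
        half[OF ne(2) SBC(2) cball_side[OF pc dbc]] by blast
  next
    case C
    then obtain \<alpha> \<beta> where h: "p \<in> sphere c rc" "p = c + \<alpha> *\<^sub>R (a-c) + \<beta> *\<^sub>R (b-c)" "\<alpha> \<ge> 0" "\<beta> \<ge> 0"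
      unfolding objective_arc_def by auto
    have pc: "p \<in> cball c rc" using h(1) by simp
    show ?thesis
      using arc[OF h SAC'(2) SBC'(2)]
        half[OF ne(3)[symmetric] SAC'(1) cball_side[OF pc dca]]
        half[OF ne(2)[symmetric] SBC'(1) cball_side[OF pc dcb]] by blast
  qed
qed

theorem corollary1:
  fixes \<C> :: "disc set" and m :: nat and T :: "nat \<Rightarrow> disc \<times> disc \<times> disc"
  assumes "finite \<C>"
    and "\<forall>D\<in>\<C>. snd D > 0"
    and "\<forall>D\<in>\<C>. \<forall>E\<in>\<C>. D \<noteq> E \<longrightarrow> disc_set D \<inter> disc_set E = {}"
    and "\<forall>t<m. triple_discs (T t) \<subseteq> \<C>"
    and "\<forall>t<m. \<not> collinear {fst (fst (T t)), fst (fst (snd (T t))), fst (snd (snd (T t)))}"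
    and "q \<in> (\<Inter>t\<in>{..<m}. triple_feasible (T t))"
  shows "\<forall>t<m. \<forall>p\<in>triple_arcs (T t). \<forall>D\<in>triple_discs (T t).
           open_segment q p \<inter> disc_interior D = {}"
proof (intro allI impI ballI)
  fix t p D assume t: "t < m" and p: "p \<in> triple_arcs (T t)" and D: "D \<in> triple_discs (T t)"
  obtain a ra b rb c rc where Tt: "T t = ((a,ra),(b,rb),(c,rc))" by (metis prod.exhaust)
  have sub: "(a,ra) \<in> \<C>" "(b,rb) \<in> \<C>" "(c,rc) \<in> \<C>" using assms(4) t Tt by (auto simp: triple_discs_def)
  have pos: "ra > 0" "rb > 0" "rc > 0" using sub assms(2) by auto
  have nc: "\<not> collinear {a, b, c}" using assms(5) t Tt by auto
  have ne: "a \<noteq> b" "b \<noteq> c" "a \<noteq> c"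
  proof -
    show "a \<noteq> b" using nc collinear_2[of a c] by (cases "a = b") simp_all
    show "b \<noteq> c" using nc collinear_2[of a b] by (cases "b = c") simp_all
    have "{a,b,a} = {a,b}" by auto
    then show "a \<noteq> c" using nc collinear_2[of a b] by (cases "a = c") simp_all
  qed
  have dj: "cball a ra \<inter> cball b rb = {}" "cball b rb \<inter> cball c rc = {}" "cball a ra \<inter> cball c rc = {}"
    using assms(3)[rule_format, OF sub(1) sub(2)] assms(3)[rule_format, OF sub(2) sub(3)]
      assms(3)[rule_format, OF sub(1) sub(3)] ne by (simp_all add: disc_set_def)
  have q: "q \<in> slab (a,ra) (b,rb)" "q \<in> slab (b,rb) (c,rc)" "q \<in> slab (a,ra) (c,rc)"
  proof -
    have "q \<in> triple_feasible (T t)" using assms(6) t by blast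
    then show "q \<in> slab (a,ra) (b,rb)" "q \<in> slab (b,rb) (c,rc)" "q \<in> slab (a,ra) (c,rc)"
      unfolding Tt by (simp_all add: triple_feasible_def feasible_region_def)
  qed
  have pp: "p \<in> objective_arc (a,ra) (b,rb) (c,rc) \<union> objective_arc (b,rb) (a,ra) (c,rc) \<union> objective_arc (c,rc) (a,ra) (b,rb)"
    using p unfolding Tt by (simp add: triple_arcs_def)
  have r: "open_segment q p \<inter> ball a ra = {} \<and> open_segment q p \<inter> ball b rb = {} \<and> open_segment q p \<inter> ball c rc = {}"
    by (rule triple_ok[OF pos sep_dist[OF dj(1) pos(1,2)] sep_dist[OF dj(2) pos(2,3)] sep_dist[OF dj(3) pos(1,3)] ne q pp])
  show "open_segment q p \<inter> disc_interior D = {}"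
  proof -
    have "D = (a,ra) \<or> D = (b,rb) \<or> D = (c,rc)" using D unfolding Tt triple_discs_def by simp
    then show ?thesis using r by (elim disjE) (simp_all add: disc_interior_def)
  qed
qed

end
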